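(* Let $Q=2^q$, $n\ge1$, $\varepsilon\in[0,1]$, $d\in[0,1]$ with $dn$ an integer, $\delta_1,\delta_2\ge0$, and let $A\subseteq[Q]^n$, $B\subseteq[Q]^n$ be $(d,2\varepsilon)$-diverse with $|A|\ge Q^{n(1-\delta_1)}$ and $|B|\ge Q^{n(1-\delta_2)}$. If $W$ is drawn from $\mathcal{W}_{Q,\varepsilon}$, then with probability at least $1/2$, $$\mathcal{R}^{(0)}_{W,n}\ge 2q\left(1-\left(\frac{\delta_1+\delta_2}{2}+d\right)\right)-2.$$
   Context: Fix an integer $q\ge1$, $Q=2^q$, $[Q]=\{1,\dots,Q\}$, and a symbol $\phi\notin[Q]$. A channel is $W=(W_1,W_2)$ with $W_i:[Q]^2\to[Q]\cup\{\phi\}$; $W^{(n)}_i(x,y)=(W_i(x_1,y_1),\dots,W_i(x_n,y_n))$ for $x,y\in[Q]^n$. A zero-error code of block length $n$ with message sets $[M_1],[M_2]$ consists of encoders $E_i:[M_i]\to[Q]^n$ and decoders $D_i:([Q]\cup\{\phi\})^n\to[M_i]$ with $D_i(W^{(n)}_i(E_1(m_1),E_2(m_2)))=m_i$ for $i=1,2$ and all message pairs; $\mathcal{R}^{(0)}_{W,n}$ is the supremum of $\frac1n\log_2(M_1M_2)$ over such codes. $\mathcal{W}_{Q,\varepsilon}$ is the distribution over channels in which, independently for every $(x,y)\in[Q]^2$, $W(x,y)=(\phi,\phi)$ with probability $\varepsilon$ and $W(x,y)=(x,y)$ otherwise. A pair $(x^{(n)},y^{(n)})\in[Q]^n\times[Q]^n$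 is $(d,\varepsilon)$-diverse if for every index set $I\subseteq[n]$ with $|I|=dn$, $|\{(x_j,y_j):j\in I\}|>\varepsilon Q^2$; sets $A,B\subseteq[Q]^n$ are $(d,\varepsilon)$-diverse if every $(x^{(n)},y^{(n)})\in A\times B$ is $(d,\varepsilon)$-diverse. *)

theory Defs
  imports "HOL-Probability.Probability"
begin

text \<open>Symbols of [Q] are the naturals 1..Q; the erasure symbol phi is None,
  so outputs are of type nat option.\<close>

type_synonym channel = "nat \<times> nat \<Rightarrow> nat option \<times> nat option"

definition blocks :: "nat \<Rightarrow> nat \<Rightarrow> nat list set" where
  "blocks Q n = {xs. length xs = n \<and> set xs \<subseteq> {1..Q}}"

definition chan_n :: "(nat \<times> nat \<Rightarrow> nat option) \<Rightarrow> nat list \<Rightarrow> nat list \<Rightarrow> nat option list" where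
  "chan_n Wi x y = map Wi (zip x y)"

definition zero_error_code ::
  "nat \<Rightarrow> channel \<Rightarrow> nat \<Rightarrow> nat \<Rightarrow> nat \<Rightarrow> bool" where
  "zero_error_code Q W n M1 M2 \<longleftrightarrow>
     (\<exists>(E1 :: nat \<Rightarrow> nat list) (E2 :: nat \<Rightarrow> nat list)
        (D1 :: nat option list \<Rightarrow> nat) (D2 :: nat option list \<Rightarrow> nat).
        (\<forall>m\<in>{1..M1}. E1 m \<in> blocks Q n) \<and> (\<forall>m\<in>{1..M2}. E2 m \<in> blocks Q n) \<and>
        (\<forall>z. D1 z \<in> {1..M1}) \<and> (\<forall>z. D2 z \<in> {1..M2}) \<and>
        (\<forall>m1\<in>{1..M1}. \<forall>m2\<in>{1..M2}.
           D1 (chan_n (fst \<circ> W) (E1 m1) (E2 m2)) = m1 \<and>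
           D2 (chan_n (snd \<circ> W) (E1 m1) (E2 m2)) = m2))"

definition zero_error_rate :: "nat \<Rightarrow> channel \<Rightarrow> nat \<Rightarrow> real" where
  "zero_error_rate Q W n =
     Sup {log 2 (real (M1 * M2)) / real n | M1 M2. zero_error_code Q W n M1 M2}"

definition channel_dist :: "nat \<Rightarrow> real \<Rightarrow> channel pmf" where
  "channel_dist Q eps =
     map_pmf (\<lambda>e. \<lambda>(x, y). if e (x, y) then (None, None) else (Some x, Some y))
       (Pi_pmf ({1..Q} \<times> {1..Q}) False (\<lambda>_. bernoulli_pmf eps))"

definition diverse_pair :: "nat \<Rightarrow> nat \<Rightarrow> real \<Rightarrow> real \<Rightarrow> nat list \<Rightarrow> nat list \<Rightarrow> bool" where
  "diverse_pair Q n d eps x y \<longleftrightarrow>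
     (\<forall>I. I \<subseteq> {0..<n} \<and> real (card I) = d * real n \<longrightarrow>
          real (card ((\<lambda>j. (x ! j, y ! j)) ` I)) > eps * real Q ^ 2)"

definition diverse_sets :: "nat \<Rightarrow> nat \<Rightarrow> real \<Rightarrow> real \<Rightarrow> nat list set \<Rightarrow> nat list set \<Rightarrow> bool" where
  "diverse_sets Q n d eps A B \<longleftrightarrow> (\<forall>x\<in>A. \<forall>y\<in>B. diverse_pair Q n d eps x y)"

end

theory Submission
  imports Defs
begin


lemma prob_part:
  fixes K :: "'a set" and eps :: real
  assumes K: "finite K" and e0: "0 \<le> eps" and e1: "eps \<le> 1"
  shows "measure_pmf.prob (Pi_pmf K False (\<lambda>_. bernoulli_pmf eps))
           {e. real (card {p\<in>K. e p}) \<le> 2 * eps * real (card K)} \<ge> 1/2"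
proof -
  define M where "M = Pi_pmf K False (\<lambda>_. bernoulli_pmf eps)"
  define X where "X = (\<lambda>e. \<Sum>p\<in>K. (if e p then 1 else 0::real))"
  have Xc: "X e = real (card {p\<in>K. e p})" for e
    unfolding X_def using K by (simp add: sum.If_cases Int_def)
  have int1: "integrable M (\<lambda>e. if e p then 1 else 0::real)" for p
    by (rule measure_pmf.integrable_const_bound[where B=1]) auto
  have exp1: "measure_pmf.expectation M (\<lambda>e. if e p then 1 else 0::real) = eps" if "p \<in> K" for p
  proof -
    have "measure_pmf.expectation M (\<lambda>e. if e p then 1 else 0::real)
        = measure_pmf.expectation (map_pmf (\<lambda>f. f p) M) (\<lambda>b. if b then 1 else 0::real)"
      by simp
    also have "map_pmf (\<lambda>f. f p) M = bernoulli_pmf eps"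
      unfolding M_def using Pi_pmf_component[OF K, of p False] that by simp
    finally show ?thesis using e0 e1 by simp
  qed
  have EX: "measure_pmf.expectation M X = eps * real (card K)"
    unfolding X_def using exp1 int1 by (subst Bochner_Integration.integral_sum) auto
  have intX: "integrable M X" unfolding X_def using int1 by auto
  have X0: "X e \<ge> 0" for e unfolding X_def by (intro sum_nonneg) auto
  have bad: "measure_pmf.prob M {e. X e > 2 * eps * real (card K)} \<le> 1/2"
  proof (cases "eps * real (card K) > 0")
    case True
    have "measure_pmf.prob M {e. X e > 2 * eps * real (card K)}
        \<le> measure_pmf.prob M {e\<in>space M. X e \<ge> 2 * eps * real (card K)}"
      by (intro measure_pmf.finite_measure_mono) auto
    also have "\<dots> \<le> measure_pmf.expectation M X / (2 * eps * real (card K))"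
      by (rule integral_Markov_inequality_measure[OF intX]) (use True X0 in auto)
    also have "\<dots> = 1/2" using True EX by (auto simp: divide_simps zero_less_mult_iff)
    finally show ?thesis .
  next
    case False
    hence z: "eps * real (card K) = 0" using e0 False by (smt (verit) mult_nonneg_nonneg of_nat_0_le_iff)
    have "measure_pmf.prob M {e. X e > 2 * eps * real (card K)}
        \<le> measure_pmf.prob M {e\<in>space M. X e \<ge> 1}"
      using z by (intro measure_pmf.finite_measure_mono) (auto simp: Xc)
    also have "\<dots> \<le> measure_pmf.expectation M X / 1"
      by (rule integral_Markov_inequality_measure[OF intX]) (use X0 in auto)
    also have "\<dots> = 0" using z EX by simp
    finally show ?thesis by simp
  qed
  have "measure_pmf.prob M {e. X e \<le> 2 * eps * real (card K)}
      = 1 - measure_pmf.prob M {e. X e > 2 * eps * real (card K)}"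
    using measure_pmf.prob_compl[of "{e. X e > 2 * eps * real (card K)}" M]
    by (simp add: Compl_eq_Diff_UNIV[symmetric] not_less Collect_neg_eq[symmetric])
  with bad show ?thesis unfolding M_def[symmetric] Xc by simp
qed



definition chanf :: "(nat \<times> nat \<Rightarrow> bool) \<Rightarrow> channel" where
  "chanf e = (\<lambda>(x, y). if e (x, y) then (None, None) else (Some x, Some y))"

definition hdset :: "nat \<Rightarrow> nat list \<Rightarrow> nat list \<Rightarrow> nat set" where
  "hdset n x y = {j\<in>{0..<n}. x ! j \<noteq> y ! j}"

definition good :: "nat \<Rightarrow> nat \<Rightarrow> nat list set \<Rightarrow> bool" where
  "good n D S \<longleftrightarrow> (\<forall>x\<in>S. \<forall>y\<in>S. x \<noteq> y \<longrightarrow> D \<le> card (hdset n x y))"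

lemma hdset_sym: "hdset n x y = hdset n y x"
  unfolding hdset_def by auto

lemma finite_blocks: "finite (blocks Q n)"
proof -
  have "blocks Q n = {xs. set xs \<subseteq> {1..Q} \<and> length xs = n}" unfolding blocks_def by auto
  thus ?thesis using finite_lists_length_eq[of "{1..Q}" n] by simp
qed

lemma chan_nth: "j < length x \<Longrightarrow> j < length y \<Longrightarrow> chan_n W x y ! j = W (x ! j, y ! j)"
  by (simp add: chan_n_def)

lemma chan_length: "length (chan_n W x y) = min (length x) (length y)"
  by (simp add: chan_n_def)

lemma card_T:
  assumes S: "S \<subseteq> {0..<n}"
  shows "card {a \<in> blocks Q n. \<forall>j<n. j \<notin> S \<longrightarrow> a ! j = b ! j} \<le> Q ^ card S"
proof -
  have fS: "finite S" using S finite_subset by blast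
  let ?T = "{a \<in> blocks Q n. \<forall>j<n. j \<notin> S \<longrightarrow> a ! j = b ! j}"
  let ?f = "\<lambda>a. restrict (\<lambda>j. a ! j) S"
  have inj: "inj_on ?f ?T"
  proof (rule inj_onI)
    fix a c assume a: "a \<in> ?T" and c: "c \<in> ?T" and eq: "?f a = ?f c"
    show "a = c"
    proof (rule nth_equalityI)
      show "length a = length c" using a c by (simp add: blocks_def)
      fix j assume "j < length a"
      hence j: "j < n" using a by (simp add: blocks_def)
      show "a ! j = c ! j"
      proof (cases "j \<in> S")
        case True thus ?thesis using fun_cong[OF eq, of j] by simp
      next
        case False thus ?thesis using a c j by auto
      qed
    qed
  qed
  have img: "?f ` ?T \<subseteq> S \<rightarrow>\<^sub>E {1..Q}"
  proof
    fix g assume "g \<in> ?f ` ?T"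
    then obtain a where a: "a \<in> ?T" and g: "g = ?f a" by blast
    have "a ! j \<in> {1..Q}" if "j \<in> S" for j
    proof -
      have "j < length a" using a S that by (auto simp: blocks_def)
      hence "a ! j \<in> set a" by (rule nth_mem)
      thus ?thesis using a by (auto simp: blocks_def)
    qed
    thus "g \<in> S \<rightarrow>\<^sub>E {1..Q}"
      unfolding g by auto
  qed
  have "card ?T \<le> card (S \<rightarrow>\<^sub>E {1..Q})"
    by (rule card_inj_on_le[OF inj img]) (simp add: finite_PiE fS)
  also have "\<dots> = Q ^ card S" by (simp add: card_PiE fS)
  finally show ?thesis .
qed

lemma ball_card:
  assumes Q: "Q \<ge> 1"
  shows "card {a \<in> blocks Q n. card (hdset n a b) < D} \<le> 2 ^ n * Q ^ D"
proof -
  define I where "I = {S. S \<subseteq> {0..<n} \<and> card S \<le> D}"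
  define T where "T S = {a \<in> blocks Q n. \<forall>j<n. j \<notin> S \<longrightarrow> a ! j = b ! j}" for S
  have fI: "finite I" unfolding I_def by (rule finite_subset[of _ "Pow {0..<n}"]) auto
  have cI: "card I \<le> 2 ^ n"
  proof -
    have "card I \<le> card (Pow {0..<n::nat})"
      by (rule card_mono) (auto simp: I_def)
    thus ?thesis by (simp add: card_Pow)
  qed
  have sub: "{a \<in> blocks Q n. card (hdset n a b) < D} \<subseteq> (\<Union>S\<in>I. T S)"
  proof
    fix a assume a: "a \<in> {a \<in> blocks Q n. card (hdset n a b) < D}"
    have "hdset n a b \<in> I" using a by (auto simp: I_def hdset_def)
    moreover have "a \<in> T (hdset n a b)" using a by (auto simp: T_def hdset_def)
    ultimately show "a \<in> (\<Union>S\<in>I. T S)" by blast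
  qed
  have fT: "finite (T S)" for S unfolding T_def using finite_blocks by auto
  have "card {a \<in> blocks Q n. card (hdset n a b) < D} \<le> card (\<Union>S\<in>I. T S)"
    by (rule card_mono[OF _ sub]) (use fI fT in auto)
  also have "\<dots> \<le> (\<Sum>S\<in>I. card (T S))" by (rule card_UN_le[OF fI])
  also have "\<dots> \<le> (\<Sum>S\<in>I. Q ^ D)"
  proof (rule sum_mono)
    fix S assume S: "S \<in> I"
    have "card (T S) \<le> Q ^ card S" unfolding T_def using S by (intro card_T) (auto simp: I_def)
    also have "\<dots> \<le> Q ^ D" using S Q by (intro power_increasing) (auto simp: I_def)
    finally show "card (T S) \<le> Q ^ D" .
  qed
  also have "\<dots> = card I * Q ^ D" by simp
  also have "\<dots> \<le> 2 ^ n * Q ^ D" using cI by simp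
  finally show ?thesis .
qed

lemma packing:
  assumes fA: "finite A" and AB: "A \<subseteq> blocks Q n" and Q: "Q \<ge> 1" and D: "D \<ge> 1"
  shows "\<exists>A'\<subseteq>A. good n D A' \<and> card A \<le> card A' * (2 ^ n * Q ^ D)"
proof -
  define F where "F = {S. S \<subseteq> A \<and> good n D S}"
  have fF: "finite F" unfolding F_def by (rule finite_subset[of _ "Pow A"]) (use fA in auto)
  have "{} \<in> F" by (simp add: F_def good_def)
  then obtain A' where A': "A' \<in> F" and mx: "\<forall>S\<in>F. A' \<subseteq> S \<longrightarrow> A' = S"
    using finite_has_maximal[OF fF] by blast
  have cov: "A \<subseteq> (\<Union>a'\<in>A'. {a \<in> blocks Q n. card (hdset n a a') < D})"
  proof
    fix a assume a: "a \<in> A"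
    show "a \<in> (\<Union>a'\<in>A'. {a \<in> blocks Q n. card (hdset n a a') < D})"
    proof (cases "a \<in> A'")
      case True
      have "hdset n a a = {}" by (simp add: hdset_def)
      hence "card (hdset n a a) < D" using D by simp
      thus ?thesis using True a AB by blast
    next
      case False
      have "insert a A' \<notin> F" using mx False by blast
      hence "\<not> good n D (insert a A')" using A' a by (auto simp: F_def)
      then obtain u v where uv: "u \<in> insert a A'" "v \<in> insert a A'" "u \<noteq> v" "card (hdset n u v) < D"
        unfolding good_def by (auto simp: not_le)
      have gA': "good n D A'" using A' by (simp add: F_def)
      have "\<exists>a'\<in>A'. card (hdset n a a') < D"
      proof (cases "u = a")
        case True
        hence "v \<in> A'" using uv by auto
        thus ?thesis using uv True by blast
      next
        case False
        hence u: "u \<in> A'" using uv by auto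
        show ?thesis
        proof (cases "v = a")
          case True
          thus ?thesis using u uv hdset_sym[of n u v] by auto
        next
          case False
          hence "v \<in> A'" using uv by auto
          hence "D \<le> card (hdset n u v)" using gA' u uv(3) unfolding good_def by blast
          thus ?thesis using uv(4) by simp
        qed
      qed
      then obtain a' where "a' \<in> A'" "card (hdset n a a') < D" by blast
      thus ?thesis using a AB by auto
    qed
  qed
  have fA': "finite A'" using A' fA by (metis (mono_tags, lifting) F_def mem_Collect_eq finite_subset)
  have "card A \<le> card (\<Union>a'\<in>A'. {a \<in> blocks Q n. card (hdset n a a') < D})"
    by (rule card_mono[OF _ cov]) (use fA' finite_blocks in auto)
  also have "\<dots> \<le> (\<Sum>a'\<in>A'. card {a \<in> blocks Q n. card (hdset n a a') < D})"
    by (rule card_UN_le[OF fA'])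
  also have "\<dots> \<le> (\<Sum>a'\<in>A'. 2 ^ n * Q ^ D)"
    by (rule sum_mono) (rule ball_card[OF Q])
  also have "\<dots> = card A' * (2 ^ n * Q ^ D)" by simp
  finally show ?thesis using A' by (auto simp: F_def)
qed




lemma key1:
  assumes A': "A' \<subseteq> blocks Q n" and B': "B' \<subseteq> blocks Q n" and gA: "good n D A'"
    and er: "\<forall>x\<in>A'. \<forall>y\<in>B'. card {j\<in>{0..<n}. e (x ! j, y ! j)} < D"
    and x: "x \<in> A'" and x': "x' \<in> A'" and y: "y \<in> B'" and y': "y' \<in> B'"
    and eq: "chan_n (fst \<circ> chanf e) x y = chan_n (fst \<circ> chanf e) x' y'"
  shows "x = x'"
proof (rule ccontr)
  assume ne: "x \<noteq> x'"
  have len: "length x = n" "length x' = n" "length y = n" "length y' = n"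
    using A' B' x x' y y' by (auto simp: blocks_def)
  have "hdset n x x' \<subseteq> {j\<in>{0..<n}. e (x ! j, y ! j)}"
  proof
    fix j assume j: "j \<in> hdset n x x'"
    hence jn: "j < n" and d: "x ! j \<noteq> x' ! j" by (auto simp: hdset_def)
    have "chan_n (fst \<circ> chanf e) x y ! j = chan_n (fst \<circ> chanf e) x' y' ! j" using eq by simp
    hence "e (x ! j, y ! j)" using jn len d by (auto simp: chan_nth chanf_def split: if_splits)
    thus "j \<in> {j\<in>{0..<n}. e (x ! j, y ! j)}" using jn by simp
  qed
  hence "card (hdset n x x') \<le> card {j\<in>{0..<n}. e (x ! j, y ! j)}" by (intro card_mono) auto
  also have "\<dots> < D" using er x y by blast
  finally show False using gA x x' ne unfolding good_def by fastforce
qed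

lemma key2:
  assumes A': "A' \<subseteq> blocks Q n" and B': "B' \<subseteq> blocks Q n" and gB: "good n D B'"
    and er: "\<forall>x\<in>A'. \<forall>y\<in>B'. card {j\<in>{0..<n}. e (x ! j, y ! j)} < D"
    and x: "x \<in> A'" and x': "x' \<in> A'" and y: "y \<in> B'" and y': "y' \<in> B'"
    and eq: "chan_n (snd \<circ> chanf e) x y = chan_n (snd \<circ> chanf e) x' y'"
  shows "y = y'"
proof (rule ccontr)
  assume ne: "y \<noteq> y'"
  have len: "length x = n" "length x' = n" "length y = n" "length y' = n"
    using A' B' x x' y y' by (auto simp: blocks_def)
  have "hdset n y y' \<subseteq> {j\<in>{0..<n}. e (x ! j, y ! j)}"
  proof
    fix j assume j: "j \<in> hdset n y y'"
    hence jn: "j < n" and d: "y ! j \<noteq> y' ! j" by (auto simp: hdset_def)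
    have "chan_n (snd \<circ> chanf e) x y ! j = chan_n (snd \<circ> chanf e) x' y' ! j" using eq by simp
    hence "e (x ! j, y ! j)" using jn len d by (auto simp: chan_nth chanf_def split: if_splits)
    thus "j \<in> {j\<in>{0..<n}. e (x ! j, y ! j)}" using jn by simp
  qed
  hence "card (hdset n y y') \<le> card {j\<in>{0..<n}. e (x ! j, y ! j)}" by (intro card_mono) auto
  also have "\<dots> < D" using er x y by blast
  finally show False using gB y y' ne unfolding good_def by fastforce
qed

lemma code_exists:
  assumes A': "A' \<subseteq> blocks Q n" and B': "B' \<subseteq> blocks Q n" and gA: "good n D A'" and gB: "good n D B'"
    and fA: "finite A'" and fB: "finite B'" and nA: "A' \<noteq> {}" and nB: "B' \<noteq> {}"
    and er: "\<forall>x\<in>A'. \<forall>y\<in>B'. card {j\<in>{0..<n}. e (x ! j, y ! j)} < D"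
  shows "zero_error_code Q (chanf e) n (card A') (card B')"
proof -
  define M1 where "M1 = card A'"
  define M2 where "M2 = card B'"
  have M1: "M1 \<ge> 1" using fA nA by (simp add: M1_def Suc_le_eq card_gt_0_iff)
  have M2: "M2 \<ge> 1" using fB nB by (simp add: M2_def Suc_le_eq card_gt_0_iff)
  obtain h1 where h1: "bij_betw h1 {1..M1} A'" using ex_bij_betw_nat_finite_1[OF fA] M1_def by blast
  obtain h2 where h2: "bij_betw h2 {1..M2} B'" using ex_bij_betw_nat_finite_1[OF fB] M2_def by blast
  have h1A: "h1 m \<in> A'" if "m \<in> {1..M1}" for m by (rule bij_betw_apply[OF h1 that])
  have h2B: "h2 m \<in> B'" if "m \<in> {1..M2}" for m by (rule bij_betw_apply[OF h2 that])
  define C1 where "C1 = chan_n (fst \<circ> chanf e)"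
  define C2 where "C2 = chan_n (snd \<circ> chanf e)"
  define P1 where "P1 z m1 \<longleftrightarrow> m1 \<in> {1..M1} \<and> (\<exists>m2\<in>{1..M2}. C1 (h1 m1) (h2 m2) = z)" for z m1
  define P2 where "P2 z m2 \<longleftrightarrow> m2 \<in> {1..M2} \<and> (\<exists>m1\<in>{1..M1}. C2 (h1 m1) (h2 m2) = z)" for z m2
  define D1 where "D1 z = (if \<exists>m. P1 z m then (SOME m. P1 z m) else 1)" for z
  define D2 where "D2 z = (if \<exists>m. P2 z m then (SOME m. P2 z m) else 1)" for z
  have D1r: "D1 z \<in> {1..M1}" for z
    unfolding D1_def using M1 by (auto intro: someI2_ex simp: P1_def)
  have D2r: "D2 z \<in> {1..M2}" for z
    unfolding D2_def using M2 by (auto intro: someI2_ex simp: P2_def)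
  have D1c: "D1 (C1 (h1 m1) (h2 m2)) = m1" if m1: "m1 \<in> {1..M1}" and m2: "m2 \<in> {1..M2}" for m1 m2
  proof -
    have p: "P1 (C1 (h1 m1) (h2 m2)) m1" using m1 m2 by (auto simp: P1_def)
    have u: "m = m1" if "P1 (C1 (h1 m1) (h2 m2)) m" for m
    proof -
      from that obtain m2' where m: "m \<in> {1..M1}" and m2': "m2' \<in> {1..M2}"
        and eq: "C1 (h1 m) (h2 m2') = C1 (h1 m1) (h2 m2)" by (auto simp: P1_def)
      have "h1 m = h1 m1"
        by (rule key1[OF A' B' gA er h1A[OF m] h1A[OF m1] h2B[OF m2'] h2B[OF m2] eq[unfolded C1_def]])
      thus ?thesis using bij_betw_imp_inj_on[OF h1] m m1 by (auto dest: inj_onD)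
    qed
    have "(SOME m. P1 (C1 (h1 m1) (h2 m2)) m) = m1" using p u by (rule some_equality)
    thus ?thesis using p unfolding D1_def by auto
  qed
  have D2c: "D2 (C2 (h1 m1) (h2 m2)) = m2" if m1: "m1 \<in> {1..M1}" and m2: "m2 \<in> {1..M2}" for m1 m2
  proof -
    have p: "P2 (C2 (h1 m1) (h2 m2)) m2" using m1 m2 by (auto simp: P2_def)
    have u: "m = m2" if "P2 (C2 (h1 m1) (h2 m2)) m" for m
    proof -
      from that obtain m1' where m: "m \<in> {1..M2}" and m1': "m1' \<in> {1..M1}"
        and eq: "C2 (h1 m1') (h2 m) = C2 (h1 m1) (h2 m2)" by (auto simp: P2_def)
      have "h2 m = h2 m2"
        by (rule key2[OF A' B' gB er h1A[OF m1'] h1A[OF m1] h2B[OF m] h2B[OF m2] eq[unfolded C2_def]])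
      thus ?thesis using bij_betw_imp_inj_on[OF h2] m m2 by (auto dest: inj_onD)
    qed
    have "(SOME m. P2 (C2 (h1 m1) (h2 m2)) m) = m2" using p u by (rule some_equality)
    thus ?thesis using p unfolding D2_def by auto
  qed
  show ?thesis
    unfolding zero_error_code_def M1_def[symmetric] M2_def[symmetric]
    apply (rule exI[of _ h1], rule exI[of _ h2], rule exI[of _ D1], rule exI[of _ D2])
    using h1A h2B A' B' D1r D2r D1c D2c unfolding C1_def C2_def by blast
qed

lemma rate_lower:
  assumes n: "n \<ge> 1" and c: "zero_error_code Q (chanf e) n M1 M2"
  shows "log 2 (real (M1 * M2)) / real n \<le> zero_error_rate Q (chanf e) n"
proof -
  define Outs where "Outs = {zs. set zs \<subseteq> insert None (Some ` {1..Q}) \<and> length zs = n}"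
  have fO: "finite Outs" unfolding Outs_def by (rule finite_lists_length_eq) simp
  have bnd: "M1 \<le> card Outs \<and> M2 \<le> card Outs" if "zero_error_code Q (chanf e) n M1 M2" for M1 M2
  proof -
    from that obtain E1 E2 D1 D2 where
      E1: "\<forall>m\<in>{1..M1}. E1 m \<in> blocks Q n" and E2: "\<forall>m\<in>{1..M2}. E2 m \<in> blocks Q n" and
      D1: "\<forall>z. D1 z \<in> {1..M1}" and D2: "\<forall>z. D2 z \<in> {1..M2}" and
      dec: "\<forall>m1\<in>{1..M1}. \<forall>m2\<in>{1..M2}.
           D1 (chan_n (fst \<circ> chanf e) (E1 m1) (E2 m2)) = m1 \<and>
           D2 (chan_n (snd \<circ> chanf e) (E1 m1) (E2 m2)) = m2"
      unfolding zero_error_code_def by blast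
    have one1: "1 \<in> {1..M1}"
    proof -
      have "D1 [] \<in> {1..M1}" using D1 by blast
      thus ?thesis by auto
    qed
    have one2: "1 \<in> {1..M2}"
    proof -
      have "D2 [] \<in> {1..M2}" using D2 by blast
      thus ?thesis by auto
    qed
    have inO1: "chan_n (fst \<circ> chanf e) x y \<in> Outs" if "x \<in> blocks Q n" "y \<in> blocks Q n" for x y
    proof -
      have "set (chan_n (fst \<circ> chanf e) x y) \<subseteq> insert None (Some ` {1..Q})"
      proof
        fix z assume "z \<in> set (chan_n (fst \<circ> chanf e) x y)"
        then obtain a b where ab: "(a, b) \<in> set (zip x y)" and z: "z = fst (chanf e (a, b))"
          by (auto simp: chan_n_def)
        have "a \<in> set x" using ab by (rule set_zip_leftD)
        hence "a \<in> {1..Q}" using that by (auto simp: blocks_def)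
        thus "z \<in> insert None (Some ` {1..Q})" using z by (auto simp: chanf_def)
      qed
      thus ?thesis using that by (auto simp: Outs_def chan_length blocks_def)
    qed
    have inO2: "chan_n (snd \<circ> chanf e) x y \<in> Outs" if "x \<in> blocks Q n" "y \<in> blocks Q n" for x y
    proof -
      have "set (chan_n (snd \<circ> chanf e) x y) \<subseteq> insert None (Some ` {1..Q})"
      proof
        fix z assume "z \<in> set (chan_n (snd \<circ> chanf e) x y)"
        then obtain a b where ab: "(a, b) \<in> set (zip x y)" and z: "z = snd (chanf e (a, b))"
          by (auto simp: chan_n_def)
        have "b \<in> set y" using ab by (rule set_zip_rightD)
        hence "b \<in> {1..Q}" using that by (auto simp: blocks_def)
        thus "z \<in> insert None (Some ` {1..Q})" using z by (auto simp: chanf_def)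
      qed
      thus ?thesis using that by (auto simp: Outs_def chan_length blocks_def)
    qed
    have i1: "inj_on (\<lambda>m. chan_n (fst \<circ> chanf e) (E1 m) (E2 1)) {1..M1}"
      by (rule inj_onI) (metis dec one2)
    have i2: "inj_on (\<lambda>m. chan_n (snd \<circ> chanf e) (E1 1) (E2 m)) {1..M2}"
      by (rule inj_onI) (metis dec one1)
    have "card {1..M1} \<le> card Outs"
      by (rule card_inj_on_le[OF i1 _ fO]) (use inO1 E1 E2 one2 in auto)
    moreover have "card {1..M2} \<le> card Outs"
      by (rule card_inj_on_le[OF i2 _ fO]) (use inO2 E1 E2 one1 in auto)
    ultimately show ?thesis by simp
  qed
  define N where "N = card Outs"
  have sub: "{log 2 (real (M1 * M2)) / real n | M1 M2. zero_error_code Q (chanf e) n M1 M2}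
      \<subseteq> (\<lambda>(a, b). log 2 (real (a * b)) / real n) ` ({..N} \<times> {..N})"
  proof
    fix r assume "r \<in> {log 2 (real (M1 * M2)) / real n | M1 M2. zero_error_code Q (chanf e) n M1 M2}"
    then obtain a b where r: "r = log 2 (real (a * b)) / real n" and cab: "zero_error_code Q (chanf e) n a b"
      by blast
    have "(a, b) \<in> {..N} \<times> {..N}" using bnd[OF cab] by (auto simp: N_def)
    thus "r \<in> (\<lambda>(a, b). log 2 (real (a * b)) / real n) ` ({..N} \<times> {..N})" using r by force
  qed
  have bdd: "bdd_above {log 2 (real (M1 * M2)) / real n | M1 M2. zero_error_code Q (chanf e) n M1 M2}"
    by (rule bdd_above_finite, rule finite_subset[OF sub]) simp
  have mem: "log 2 (real (M1 * M2)) / real n \<in> {log 2 (real (M1 * M2)) / real n | M1 M2. zero_error_code Q (chanf e) n M1 M2}"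
    using c by blast
  show ?thesis unfolding zero_error_rate_def by (rule cSup_upper[OF mem bdd])
qed




lemma arith1:
  fixes M a q n D :: nat and \<delta> :: real
  assumes a: "real a \<ge> real (2^q) powr (real n * (1 - \<delta>))" and M: "a \<le> M * (2^n * (2^q)^D)"
  shows "M > 0 \<and> log 2 (real M) \<ge> real q * real n * (1 - \<delta>) - real n - real q * real D"
proof -
  have p: "real (2^q) powr (real n * (1 - \<delta>)) = 2 powr (real q * (real n * (1 - \<delta>)))"
    by (simp add: powr_realpow[symmetric] powr_powr)
  have r: "real (M * (2^n * (2^q)^D)) = real M * 2 powr (real n + real q * real D)"
  proof -
    have "(2::real)^n * (2^q)^D = 2 ^ (n + q * D)" by (simp add: power_add power_mult)
    also have "\<dots> = 2 powr (real (n + q * D))" by (rule powr_realpow[symmetric]) simp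
    finally show ?thesis by simp
  qed
  have "2 powr (real q * (real n * (1 - \<delta>))) \<le> real M * 2 powr (real n + real q * real D)"
    using a M p r by (metis of_nat_le_iff order_trans)
  hence le: "2 powr (real q * (real n * (1 - \<delta>))) / 2 powr (real n + real q * real D) \<le> real M"
    by (simp add: divide_le_eq)
  hence le2: "2 powr (real q * real n * (1 - \<delta>) - real n - real q * real D) \<le> real M"
    by (simp add: powr_diff[symmetric] algebra_simps)
  have Mp: "real M > 0" using le2 by (smt (verit) powr_gt_zero)
  show ?thesis using Mp le2 by (simp add: le_log_iff)
qed




theorem theorem3:
  fixes q n :: nat and eps d \<delta>1 \<delta>2 :: real and A B :: "nat list set"
  assumes "q \<ge> 1" and "n \<ge> 1"
    and "0 \<le> eps" and "eps \<le> 1"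
    and "0 \<le> d" and "d \<le> 1" and "d * real n \<in> \<int>"
    and "\<delta>1 \<ge> 0" and "\<delta>2 \<ge> 0"
    and "A \<subseteq> blocks (2 ^ q) n" and "B \<subseteq> blocks (2 ^ q) n"
    and "diverse_sets (2 ^ q) n d (2 * eps) A B"
    and "real (card A) \<ge> real (2 ^ q) powr (real n * (1 - \<delta>1))"
    and "real (card B) \<ge> real (2 ^ q) powr (real n * (1 - \<delta>2))"
  shows "measure_pmf.prob (channel_dist (2 ^ q) eps)
           {W. zero_error_rate (2 ^ q) W n
                 \<ge> 2 * real q * (1 - ((\<delta>1 + \<delta>2) / 2 + d)) - 2} \<ge> 1 / 2"
proof -
  note assms' = assms
  define Q :: nat where "Q = 2 ^ q"
  have Q1: "Q \<ge> 1" by (simp add: Q_def)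
  define K where "K = {1..Q} \<times> {1..Q}"
  have fK: "finite K" by (simp add: K_def)
  have cK: "card K = Q ^ 2" by (simp add: K_def power2_eq_square)
  have AB: "A \<subseteq> blocks Q n" "B \<subseteq> blocks Q n" using assms(10,11) by (simp_all add: Q_def)
  have fA: "finite A" and fB: "finite B" using AB finite_blocks finite_subset by blast+
  have cA: "card A > 0"
  proof -
    have "real (2 ^ q :: nat) powr (real n * (1 - \<delta>1)) > 0" by simp
    hence "real (card A) > 0" using assms(13) by linarith
    thus ?thesis by simp
  qed
  have cB: "card B > 0"
  proof -
    have "real (2 ^ q :: nat) powr (real n * (1 - \<delta>2)) > 0" by simp
    hence "real (card B) > 0" using assms(14) by linarith
    thus ?thesis by simp
  qed
  have nA: "A \<noteq> {}" and nB: "B \<noteq> {}" using cA cB by auto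
  have div: "diverse_pair Q n d (2 * eps) x y" if "x \<in> A" "y \<in> B" for x y
    using assms(12) that by (simp add: diverse_sets_def Q_def)
  obtain z where z: "d * real n = of_int z" using assms(7) Ints_cases by blast
  define D where "D = nat z"
  have z0: "z \<ge> 0" using z assms(5) by (metis mult_nonneg_nonneg of_int_0_le_iff of_nat_0_le_iff)
  have Dr: "real D = d * real n" using z z0 by (simp add: D_def)
  have D1: "D \<ge> 1"
  proof (rule ccontr)
    assume "\<not> D \<ge> 1"
    hence "D = 0" by simp
    obtain x y where xy: "x \<in> A" "y \<in> B" using nA nB by blast
    have "real (card ((\<lambda>j. (x ! j, y ! j)) ` {})) > 2 * eps * real Q ^ 2"
      using div[OF xy] \<open>D = 0\<close> Dr unfolding diverse_pair_def by (metis card.empty empty_subsetI of_nat_0)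
    moreover have "0 \<le> eps * real Q ^ 2" using assms(3) by simp
    ultimately show False by simp
  qed
  obtain A' where A': "A' \<subseteq> A" "good n D A'" "card A \<le> card A' * (2 ^ n * Q ^ D)"
    using packing[OF fA AB(1) Q1 D1] by blast
  obtain B' where B': "B' \<subseteq> B" "good n D B'" "card B \<le> card B' * (2 ^ n * Q ^ D)"
    using packing[OF fB AB(2) Q1 D1] by blast
  have a1: "card A' > 0 \<and> log 2 (real (card A')) \<ge> real q * real n * (1 - \<delta>1) - real n - real q * real D"
    by (rule arith1) (use assms(13) A'(3) in \<open>simp_all add: Q_def\<close>)
  have b1: "card B' > 0 \<and> log 2 (real (card B')) \<ge> real q * real n * (1 - \<delta>2) - real n - real q * real D"
    by (rule arith1) (use assms(14) B'(3) in \<open>simp_all add: Q_def\<close>)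
  have fA': "finite A'" "finite B'" using A'(1) B'(1) fA fB finite_subset by blast+
  have nA': "A' \<noteq> {}" "B' \<noteq> {}" using a1 b1 by auto
  define bound where "bound = 2 * real q * (1 - ((\<delta>1 + \<delta>2) / 2 + d)) - 2"
  have det: "zero_error_rate Q (chanf e) n \<ge> bound"
    if e: "real (card {p\<in>K. e p}) \<le> 2 * eps * real (card K)" for e
  proof -
    have er: "\<forall>x\<in>A'. \<forall>y\<in>B'. card {j\<in>{0..<n}. e (x ! j, y ! j)} < D"
    proof (intro ballI, rule ccontr)
      fix x y assume x: "x \<in> A'" and y: "y \<in> B'" and "\<not> card {j\<in>{0..<n}. e (x ! j, y ! j)} < D"
      hence ge: "D \<le> card {j\<in>{0..<n}. e (x ! j, y ! j)}" by simp
      obtain I where I: "I \<subseteq> {j\<in>{0..<n}. e (x ! j, y ! j)}" "card I = D"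
        using obtain_subset_with_card_n[OF ge] by blast
      have xA: "x \<in> A" and yB: "y \<in> B" using x y A'(1) B'(1) by auto
      have lx: "length x = n" "set x \<subseteq> {1..Q}" using xA AB by (auto simp: blocks_def)
      have ly: "length y = n" "set y \<subseteq> {1..Q}" using yB AB by (auto simp: blocks_def)
      have "real (card ((\<lambda>j. (x ! j, y ! j)) ` I)) > 2 * eps * real Q ^ 2"
      proof -
        have "I \<subseteq> {0..<n}" using I(1) by auto
        moreover have "real (card I) = d * real n" using I(2) Dr by simp
        ultimately show ?thesis using div[OF xA yB] unfolding diverse_pair_def by blast
      qed
      moreover have "(\<lambda>j. (x ! j, y ! j)) ` I \<subseteq> {p\<in>K. e p}"
      proof
        fix p assume "p \<in> (\<lambda>j. (x ! j, y ! j)) ` I"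
        then obtain j where j: "j \<in> I" and p: "p = (x ! j, y ! j)" by blast
        have jn: "j < n" "e (x ! j, y ! j)" using j I by auto
        have "x ! j \<in> set x" "y ! j \<in> set y" using jn(1) lx(1) ly(1) by simp_all
        hence "x ! j \<in> {1..Q}" "y ! j \<in> {1..Q}" using lx(2) ly(2) by blast+
        thus "p \<in> {p\<in>K. e p}" using jn(2) p unfolding K_def by blast
      qed
      hence "card ((\<lambda>j. (x ! j, y ! j)) ` I) \<le> card {p\<in>K. e p}" by (rule card_mono[rotated]) (simp add: fK)
      hence c1: "real (card ((\<lambda>j. (x ! j, y ! j)) ` I)) \<le> real (card {p\<in>K. e p})" by simp
      have c2: "real (card K) = real Q ^ 2" using cK by simp
      have "real (card {p\<in>K. e p}) \<le> 2 * eps * real Q ^ 2" using e unfolding c2 .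
      ultimately show False using c1 by linarith
    qed
    have code: "zero_error_code Q (chanf e) n (card A') (card B')"
      by (rule code_exists[OF _ _ A'(2) B'(2) fA' nA' er]) (use A'(1) B'(1) AB in auto)
    have r: "log 2 (real (card A' * card B')) / real n \<le> zero_error_rate Q (chanf e) n"
      by (rule rate_lower[OF assms(2) code])
    have lg: "log 2 (real (card A' * card B')) = log 2 (real (card A')) + log 2 (real (card B'))"
      using a1 b1 by (simp add: log_mult)
    have np: "real n > 0" using assms(2) by simp
    have "bound * real n = (real q * real n * (1 - \<delta>1) - real n - real q * real D)
        + (real q * real n * (1 - \<delta>2) - real n - real q * real D)"
      unfolding bound_def Dr by (simp add: algebra_simps)
    also have "\<dots> \<le> log 2 (real (card A' * card B'))" using lg a1 b1 by linarith
    finally have "bound \<le> log 2 (real (card A' * card B')) / real n"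
      using np by (simp add: pos_le_divide_eq)
    thus ?thesis using r by simp
  qed
  have cd: "channel_dist Q eps = map_pmf chanf (Pi_pmf K False (\<lambda>_. bernoulli_pmf eps))"
    unfolding channel_dist_def K_def chanf_def by (rule refl)
  have "1/2 \<le> measure_pmf.prob (Pi_pmf K False (\<lambda>_. bernoulli_pmf eps))
           {e. real (card {p\<in>K. e p}) \<le> 2 * eps * real (card K)}"
    by (rule prob_part[OF fK assms(3,4)])
  also have "\<dots> \<le> measure_pmf.prob (Pi_pmf K False (\<lambda>_. bernoulli_pmf eps))
           (chanf -` {W. zero_error_rate Q W n \<ge> bound})"
    by (rule measure_pmf.finite_measure_mono) (use det in auto)
  also have "\<dots> = measure_pmf.prob (channel_dist Q eps) {W. zero_error_rate Q W n \<ge> bound}"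
    unfolding cd by simp
  finally show ?thesis unfolding bound_def Q_def .
qed


end
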